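(* In a partial synchronized communication system, at any time, the length of a path along a ring between any two robots lying in the same ring is an element of $2\pi\mathbb{N}$ (a nonnegative integer multiple of $2\pi$).
   Context: Model. A system consists of pairwise disjoint unit circles $C_1,\dots,C_n$ in the plane (trajectories) and a communication range $r>0$. Its communication graph $G$ has vertex set $\{C_1,\dots,C_n\}$, $C_i,C_j$ adjacent iff the distance between their centres is at most $2+r$. Positions on a circle are angles (mod $2\pi$). For an edge $(i,j)$, the link position $\phi_{ij}$ is the angle of the point of $C_i$ closest to $C_j$. A schedule $F=(f,g)$ assigns each circle a starting angle $f(C_i)$ and direction $g(C_i)\in\{1,-1\}$; a robot following it on $C_i$ is at $f(C_i)+g(C_i)2\pi t$ at time $t$. $F$ is a synchronization schedule if $g(C_i)=-g(C_j)$ for adjacent circles and robots following $F$ on adjacent $C_i,C_j$ are at $\phi_{ij},\phi_{ji}$ at exactly the same times. A synchronized communication system (SCS) consists of $n$ robots, initially one per circle, following a synchronization schedule, with the switching rule: when a robot on $C_i$ reaches $\phi_{ij}$ and $C_j$ is empty, it instantly passes to $C_j$ and from then on follows the schedule of $C_j$; if $C_j$ has a robot, they meet and each stays on its circle. A partial SCS arises by letting some robots leave (possibly at different times); remaining robots never leave. Rings. Trace a point moving along a circle $C_i$ in direction $g(C_i)$; whenever it reaches a link position $\phi_{ij}$ of its current circle, it passes to $C_j$ at $\phi_{ji}$ and continues in direction $g(C_j)$. The closed, directed curve traced is a ring; the circles decompose into rings overlapping only at link positions. A path along a ring from one point to another follows the ring in its direction of motion; its length is the total length of the circle arcs it consists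 of (passing between circles at link positions costs no length). A robot is in a ring if it lies on a point of that ring. *)

theory Defs
  imports "HOL-Analysis.Analysis"
begin

text \<open>Trajectories: unit circles indexed by a finite type 'c, circle i has centre cen i.
  The point of circle i at angle a is cen i + cis a.  Angles are reals taken mod 2 pi.\<close>

definition ang_eq :: "real \<Rightarrow> real \<Rightarrow> bool" where
  "ang_eq a b \<longleftrightarrow> (\<exists>m::int. a - b = 2 * pi * of_int m)"

definition adj :: "('c \<Rightarrow> complex) \<Rightarrow> real \<Rightarrow> 'c \<Rightarrow> 'c \<Rightarrow> bool" where
  "adj cen r i j \<longleftrightarrow> i \<noteq> j \<and> cmod (cen i - cen j) \<le> 2 + r"

text \<open>Link position: angle of the point of C_i closest to C_j.\<close>
definition link :: "('c \<Rightarrow> complex) \<Rightarrow> 'c \<Rightarrow> 'c \<Rightarrow> real" where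
  "link cen i j = Arg (cen j - cen i)"

definition spos :: "('c \<Rightarrow> real) \<Rightarrow> ('c \<Rightarrow> real) \<Rightarrow> 'c \<Rightarrow> real \<Rightarrow> real" where
  "spos f g i t = f i + g i * (2 * pi * t)"

definition sync_schedule ::
  "('c \<Rightarrow> complex) \<Rightarrow> real \<Rightarrow> ('c \<Rightarrow> real) \<Rightarrow> ('c \<Rightarrow> real) \<Rightarrow> bool" where
  "sync_schedule cen r f g \<longleftrightarrow>
     (\<forall>i. g i = 1 \<or> g i = -1) \<and>
     (\<forall>i j. adj cen r i j \<longrightarrow>
        g i = - g j \<and>
        (\<forall>t. ang_eq (spos f g i t) (link cen i j) \<longleftrightarrow> ang_eq (spos f g j t) (link cen j i)))"

text \<open>Robots are identified with their initial circles.  Robot k is present at time t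
  iff 0 <= t < leave k (leave k = \<infinity> means it never leaves).  loc k t is the circle
  robot k is on at time t; a present robot is at angle spos f g (loc k t) t.\<close>

definition present :: "('c \<Rightarrow> ereal) \<Rightarrow> 'c \<Rightarrow> real \<Rightarrow> bool" where
  "present leave k t \<longleftrightarrow> 0 \<le> t \<and> ereal t < leave k"

definition loc_before :: "(real \<Rightarrow> 'c) \<Rightarrow> real \<Rightarrow> 'c \<Rightarrow> bool" where
  "loc_before l t i \<longleftrightarrow> (\<exists>e>0. \<forall>s. t - e < s \<and> s < t \<longrightarrow> l s = i)"

definition loc_after :: "(real \<Rightarrow> 'c) \<Rightarrow> real \<Rightarrow> bool" where
  "loc_after l t \<longleftrightarrow> (\<exists>e>0. \<forall>s. t \<le> s \<and> s < t + e \<longrightarrow> l s = l t)"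

definition occupied_before ::
  "('c \<Rightarrow> ereal) \<Rightarrow> ('c \<Rightarrow> real \<Rightarrow> 'c) \<Rightarrow> 'c \<Rightarrow> real \<Rightarrow> 'c \<Rightarrow> bool" where
  "occupied_before leave loc k t j \<longleftrightarrow>
     (\<exists>k'. k' \<noteq> k \<and> present leave k' t \<and> loc_before (loc k') t j)"

definition partial_scs ::
  "('c \<Rightarrow> complex) \<Rightarrow> real \<Rightarrow> ('c \<Rightarrow> real) \<Rightarrow> ('c \<Rightarrow> real) \<Rightarrow>
   ('c \<Rightarrow> ereal) \<Rightarrow> ('c \<Rightarrow> real \<Rightarrow> 'c) \<Rightarrow> bool" where
  "partial_scs cen r f g leave loc \<longleftrightarrow>
     r > 0 \<and>
     (\<forall>i j. i \<noteq> j \<longrightarrow> cmod (cen i - cen j) > 2) \<and>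
     sync_schedule cen r f g \<and>
     (\<forall>k. loc k 0 = k) \<and>
     (\<forall>k t. present leave k t \<longrightarrow> loc_after (loc k) t) \<and>
     (\<forall>k t. present leave k t \<and> t > 0 \<longrightarrow> (\<exists>i. loc_before (loc k) t i)) \<and>
     (\<forall>k t i. present leave k t \<and> t > 0 \<and> loc_before (loc k) t i \<longrightarrow>
        (loc k t \<noteq> i \<longrightarrow>
            adj cen r i (loc k t) \<and> ang_eq (spos f g i t) (link cen i (loc k t)) \<and>
            \<not> occupied_before leave loc k t (loc k t)) \<and>
        (loc k t = i \<longrightarrow>
            (\<forall>j. adj cen r i j \<and> ang_eq (spos f g i t) (link cen i j) \<longrightarrow>
                 occupied_before leave loc k t j)))"

text \<open>Paths along rings: a nonempty list of arcs (i, a, l): on circle i, starting at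
  angle a, moving length l in direction g i.\<close>

definition arc_circ :: "'c \<times> real \<times> real \<Rightarrow> 'c" where "arc_circ A = fst A"
definition arc_start :: "'c \<times> real \<times> real \<Rightarrow> real" where "arc_start A = fst (snd A)"
definition arc_len :: "'c \<times> real \<times> real \<Rightarrow> real" where "arc_len A = snd (snd A)"
definition arc_end :: "('c \<Rightarrow> real) \<Rightarrow> 'c \<times> real \<times> real \<Rightarrow> real" where
  "arc_end g A = arc_start A + g (arc_circ A) * arc_len A"

definition path_length :: "('c \<times> real \<times> real) list \<Rightarrow> real" where
  "path_length P = sum_list (map arc_len P)"

text \<open>ring_path cen r g P p q: P is a path along a ring from point p to point q, where a
  point is (circle, angle).  Each arc stops exactly at the first link position it
  reaches, where the path passes to the neighbouring circle at its link position.\<close>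
definition ring_path ::
  "('c \<Rightarrow> complex) \<Rightarrow> real \<Rightarrow> ('c \<Rightarrow> real) \<Rightarrow> ('c \<times> real \<times> real) list \<Rightarrow>
   'c \<times> real \<Rightarrow> 'c \<times> real \<Rightarrow> bool" where
  "ring_path cen r g P p q \<longleftrightarrow>
     P \<noteq> [] \<and>
     fst p = arc_circ (hd P) \<and> ang_eq (snd p) (arc_start (hd P)) \<and>
     fst q = arc_circ (last P) \<and> ang_eq (snd q) (arc_end g (last P)) \<and>
     (\<forall>m < length P. 0 \<le> arc_len (P!m) \<and>
        (\<forall>s. 0 < s \<and> s < arc_len (P!m) \<longrightarrow>
           \<not> (\<exists>j. adj cen r (arc_circ (P!m)) j \<and>
                  ang_eq (arc_start (P!m) + g (arc_circ (P!m)) * s) (link cen (arc_circ (P!m)) j)))) \<and>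
     (\<forall>m. 0 < m \<and> m + 1 < length P \<longrightarrow> 0 < arc_len (P!m)) \<and>
     (\<forall>m. m + 1 < length P \<longrightarrow>
        adj cen r (arc_circ (P!m)) (arc_circ (P!(m+1))) \<and>
        ang_eq (arc_end g (P!m)) (link cen (arc_circ (P!m)) (arc_circ (P!(m+1)))) \<and>
        ang_eq (arc_start (P!(m+1))) (link cen (arc_circ (P!(m+1))) (arc_circ (P!m))))"

end

theory Submission
  imports Defs
begin

lemma tele:
  fixes S T h :: "'a \<Rightarrow> real"
  shows "P \<noteq> [] \<Longrightarrow> (\<forall>m. m+1 < length P \<longrightarrow> S (P!(m+1)) - T (P!m) \<in> \<int>) \<Longrightarrow>
    (\<forall>A\<in>set P. T A - S A = h A) \<Longrightarrow> sum_list (map h P) - (T (last P) - S (hd P)) \<in> \<int>"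
proof (induction P)
  case Nil then show ?case by simp
next
  case (Cons A Q)
  show ?case
  proof (cases "Q = []")
    case True then show ?thesis using Cons.prems by simp
  next
    case False
    have IH: "sum_list (map h Q) - (T (last Q) - S (hd Q)) \<in> \<int>"
    proof (rule Cons.IH[OF False])
      show "\<forall>m. m+1 < length Q \<longrightarrow> S (Q!(m+1)) - T (Q!m) \<in> \<int>"
      proof (intro allI impI)
        fix m assume "m+1 < length Q"
        then have "Suc m + 1 < length (A#Q)" by simp
        then have "S ((A#Q)!(Suc m+1)) - T ((A#Q)!Suc m) \<in> \<int>" using Cons.prems(2) by blast
        then show "S (Q!(m+1)) - T (Q!m) \<in> \<int>" by simp
      qed
      show "\<forall>A\<in>set Q. T A - S A = h A" using Cons.prems(3) by simp
    qed
    have "0 + 1 < length (A#Q)" using False by simp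
    then have "S ((A#Q)!(0+1)) - T ((A#Q)!0) \<in> \<int>" using Cons.prems(2) by blast
    then have d: "S (hd Q) - T A \<in> \<int>" using False by (simp add: hd_conv_nth)
    have hA: "h A = T A - S A" using Cons.prems(3) by simp
    have "sum_list (map h (A#Q)) - (T (last (A#Q)) - S (hd (A#Q)))
       = (sum_list (map h Q) - (T (last Q) - S (hd Q))) - (S (hd Q) - T A)"
      using False hA by simp
    then show ?thesis using IH d by (metis Ints_diff)
  qed
qed

lemma spos_time:
  assumes "g i = 1 \<or> g i = -1"
  shows "spos f g i (g i * (a - f i) / (2*pi)) = a"
  using assms by (auto simp: spos_def)

lemma ang_eq_sym: "ang_eq a b \<Longrightarrow> ang_eq b a"
  unfolding ang_eq_def by (metis minus_diff_eq mult_minus_right of_int_minus)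

lemma ang_eq_trans: "ang_eq a b \<Longrightarrow> ang_eq b c \<Longrightarrow> ang_eq a c"
  unfolding ang_eq_def
proof (elim exE)
  fix m n :: int assume "a - b = 2*pi * of_int m" "b - c = 2*pi * of_int n"
  then have "a - c = 2*pi * of_int (m+n)" by (simp add: algebra_simps)
  then show "\<exists>k::int. a - c = 2*pi * of_int k" by blast
qed

lemma ang_eq_time:
  assumes "g j = 1 \<or> g j = -1" "ang_eq (spos f g j \<tau>) (spos f g j \<sigma>)"
  shows "\<tau> - \<sigma> \<in> \<int>"
proof -
  obtain m :: int where m: "spos f g j \<tau> - spos f g j \<sigma> = 2*pi * of_int m"
    using assms(2) unfolding ang_eq_def by blast
  then have "g j * (2*pi*(\<tau> - \<sigma>)) = 2*pi * of_int m" by (simp add: spos_def algebra_simps)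
  then have "g j * (\<tau> - \<sigma>) = of_int m" by simp
  then have "\<tau> - \<sigma> = g j * of_int m" using assms(1) by auto
  then show ?thesis using assms(1) by auto
qed

theorem lemma8:
  fixes cen :: "'c::finite \<Rightarrow> complex" and r :: real and f g :: "'c \<Rightarrow> real"
    and leave :: "'c \<Rightarrow> ereal" and loc :: "'c \<Rightarrow> real \<Rightarrow> 'c"
    and x y :: 'c and t :: real and P :: "('c \<times> real \<times> real) list"
  assumes "partial_scs cen r f g leave loc"
    and "present leave x t" and "present leave y t"
    and "ring_path cen r g P (loc x t, spos f g (loc x t) t) (loc y t, spos f g (loc y t) t)"
  shows "\<exists>n::nat. path_length P = 2 * pi * real n"
proof -
  have ss: "sync_schedule cen r f g" using assms(1) unfolding partial_scs_def by blast
  have g: "\<And>i. g i = 1 \<or> g i = -1" using ss unfolding sync_schedule_def by blast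
  have sy: "\<And>i j t. adj cen r i j \<Longrightarrow>
        ang_eq (spos f g i t) (link cen i j) \<Longrightarrow> ang_eq (spos f g j t) (link cen j i)"
    using ss unfolding sync_schedule_def by blast
  define S :: "'c \<times> real \<times> real \<Rightarrow> real" where "S A = g (arc_circ A) * (arc_start A - f (arc_circ A)) / (2*pi)" for A
  define T :: "'c \<times> real \<times> real \<Rightarrow> real" where "T A = g (arc_circ A) * (arc_end g A - f (arc_circ A)) / (2*pi)" for A
  define h :: "'c \<times> real \<times> real \<Rightarrow> real" where "h A = arc_len A / (2*pi)" for A
  have spS: "spos f g (arc_circ A) (S A) = arc_start A" for A
    unfolding S_def using g by (rule spos_time)
  have spT: "spos f g (arc_circ A) (T A) = arc_end g A" for A
    unfolding T_def using g by (rule spos_time)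
  have TS: "\<forall>A\<in>set P. T A - S A = h A"
  proof
    fix A
    have "g (arc_circ A) * g (arc_circ A) = 1" using g[of "arc_circ A"] by auto
    then show "T A - S A = h A"
      unfolding T_def S_def h_def arc_end_def by (simp add: field_simps)
  qed
  have rp: "P \<noteq> []"
    "loc x t = arc_circ (hd P)" "ang_eq (spos f g (loc x t) t) (arc_start (hd P))"
    "loc y t = arc_circ (last P)" "ang_eq (spos f g (loc y t) t) (arc_end g (last P))"
    "\<forall>m < length P. 0 \<le> arc_len (P!m)"
    "\<forall>m. m + 1 < length P \<longrightarrow>
        adj cen r (arc_circ (P!m)) (arc_circ (P!(m+1))) \<and>
        ang_eq (arc_end g (P!m)) (link cen (arc_circ (P!m)) (arc_circ (P!(m+1)))) \<and>
        ang_eq (arc_start (P!(m+1))) (link cen (arc_circ (P!(m+1))) (arc_circ (P!m)))"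
    using assms(4) unfolding ring_path_def by auto
  have links: "\<forall>m. m+1 < length P \<longrightarrow> S (P!(m+1)) - T (P!m) \<in> \<int>"
  proof (intro allI impI)
    fix m assume m: "m+1 < length P"
    let ?i = "arc_circ (P!m)" and ?j = "arc_circ (P!(m+1))"
    have a: "adj cen r ?i ?j" and e: "ang_eq (arc_end g (P!m)) (link cen ?i ?j)"
      and s: "ang_eq (arc_start (P!(m+1))) (link cen ?j ?i)" using rp(7) m by auto
    have "ang_eq (spos f g ?i (T (P!m))) (link cen ?i ?j)" using e spT by simp
    then have "ang_eq (spos f g ?j (T (P!m))) (link cen ?j ?i)" using sy a by blast
    moreover have "ang_eq (link cen ?j ?i) (spos f g ?j (S (P!(m+1))))"
      using s spS ang_eq_sym by simp
    ultimately have "ang_eq (spos f g ?j (T (P!m))) (spos f g ?j (S (P!(m+1))))"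
      by (rule ang_eq_trans)
    then have "T (P!m) - S (P!(m+1)) \<in> \<int>" using g[of ?j] ang_eq_time[where g=g and j= ?j] by blast
    then have "- (T (P!m) - S (P!(m+1))) \<in> \<int>" by (rule Ints_minus)
    then show "S (P!(m+1)) - T (P!m) \<in> \<int>" by simp
  qed
  have st: "t - S (hd P) \<in> \<int>"
    using ang_eq_time[where g=g and j="arc_circ (hd P)" and f=f and \<tau>=t and \<sigma>="S (hd P)"] g[of "arc_circ (hd P)"] rp(2,3) spS by simp
  have en: "t - T (last P) \<in> \<int>"
    using ang_eq_time[where g=g and j="arc_circ (last P)" and f=f and \<tau>=t and \<sigma>="T (last P)"] g[of "arc_circ (last P)"] rp(4,5) spT by simp
  have "T (last P) - S (hd P) = (t - S (hd P)) - (t - T (last P))" by simp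
  then have d: "T (last P) - S (hd P) \<in> \<int>" using st en by (metis Ints_diff)
  have "sum_list (map h P) - (T (last P) - S (hd P)) \<in> \<int>"
    using tele[OF rp(1) links TS] .
  then have "sum_list (map h P) \<in> \<int>" using d by (metis Ints_add diff_add_cancel)
  moreover have "sum_list (map h P) = path_length P / (2*pi)"
    unfolding h_def path_length_def by (induction P) (auto simp: add_divide_distrib)
  ultimately obtain k :: int where k: "path_length P / (2*pi) = of_int k"
    by (metis Ints_cases)
  have "0 \<le> path_length P"
    unfolding path_length_def using rp(6)
    by (intro sum_list_nonneg) (metis imageE in_set_conv_nth list.set_map)
  then have "0 \<le> k" using k by (metis divide_nonneg_pos of_int_0_le_iff pi_gt_zero zero_less_mult_iff zero_less_numeral)
  have "path_length P = 2*pi * of_int k" using k by (simp add: field_simps)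
  then have "path_length P = 2*pi*real (nat k)" using \<open>0 \<le> k\<close> by simp
  then show ?thesis by blast
qed

end
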